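(* Let $s\ge 2$, let $J$ be a finite index set, and let $\gamma_j\ge 0$ ($j\in J$) with $\sum_{j\in J}\gamma_j\le 1$. For each $j\in J$ and $i'\in[s]$ let $S^j_{i'}$ be a finite set and $f^j_{i'}$ a nonnegative integer with $f^j_{i'}\le |S^j_{i'}|$, such that for each fixed $j$ the sets $S^j_1,\dots,S^j_s$ are pairwise disjoint. Let $S_{i'}=\bigcup_{j\in J}S^j_{i'}$. Then there exist pairwise disjoint sets $T_{i'}\subseteq S_{i'}$, $i'=1,\dots,s$, such that $|T_{i'}|=\left\lfloor \sum_{j\in J}\gamma_j f^j_{i'}\right\rfloor$ for all $i'\in[s]$. *)

theory Defs
  imports "HOL-Analysis.Analysis"
begin

end

theory Submission
  imports Defs
begin

lemma hall_demand:
  fixes I :: "'i set" and N :: "'i \<Rightarrow> 'a set" and d :: "'i \<Rightarrow> nat"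
  assumes "finite I" "\<forall>i\<in>I. finite (N i)" "\<forall>K\<subseteq>I. sum d K \<le> card (\<Union>(N ` K))"
  shows "\<exists>T. (\<forall>i\<in>I. T i \<subseteq> N i \<and> card (T i) = d i) \<and> (\<forall>i\<in>I. \<forall>i'\<in>I. i \<noteq> i' \<longrightarrow> T i \<inter> T i' = {})"
  using assms
proof (induction "card I + sum d I" arbitrary: I N d rule: less_induct)
  case less
  note fI = less.prems(1) and fN = less.prems(2) and H = less.prems(3)
  show ?case
  proof (cases "\<forall>i\<in>I. d i = 0")
    case True
    then show ?thesis by (intro exI[of _ "\<lambda>_. {}"]) auto
  next
    case nz: False
    show ?thesis
    proof (cases "\<exists>K. K \<subseteq> I \<and> K \<noteq> {} \<and> K \<noteq> I \<and> sum d K = card (\<Union>(N ` K))")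
      case True
      then obtain K where K: "K \<subseteq> I" "K \<noteq> {}" "K \<noteq> I" "sum d K = card (\<Union>(N ` K))" by blast
      have fK: "finite K" using K(1) fI finite_subset by blast
      have c1: "card K < card I" using K fI by (meson psubset_card_mono psubsetI)
      have s1: "sum d K \<le> sum d I" using K(1) fI by (simp add: sum_mono2)
      obtain T1 where T1: "\<forall>i\<in>K. T1 i \<subseteq> N i \<and> card (T1 i) = d i"
        "\<forall>i\<in>K. \<forall>i'\<in>K. i \<noteq> i' \<longrightarrow> T1 i \<inter> T1 i' = {}"
        using less.hyps[of K d N] c1 s1 fK fN H K(1) by force
      define U where "U = \<Union>(N ` K)"
      have fU: "finite U" unfolding U_def using fK fN K(1) by auto
      have H2: "\<forall>L\<subseteq>I - K. sum d L \<le> card (\<Union>((\<lambda>i. N i - U) ` L))"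
      proof (intro allI impI)
        fix L assume L: "L \<subseteq> I - K"
        have fL: "finite L" using L fI finite_subset by blast
        have e1: "\<Union>((\<lambda>i. N i - U) ` L) = \<Union>(N ` L) - U" by auto
        have e2: "\<Union>(N ` (L \<union> K)) = (\<Union>(N ` L) - U) \<union> U" unfolding U_def by auto
        have f3: "finite (\<Union>(N ` L) - U)" using fL fN L by auto
        have "sum d (L \<union> K) = sum d L + sum d K"
          using L fL fK by (intro sum.union_disjoint) auto
        moreover have "sum d (L \<union> K) \<le> card (\<Union>(N ` (L \<union> K)))" using H[rule_format, of "L \<union> K"] L K(1) by blast
        moreover have "card (\<Union>(N ` (L \<union> K))) = card (\<Union>(N ` L) - U) + card U"
          unfolding e2 using f3 fU by (intro card_Un_disjoint) auto
        ultimately show "sum d L \<le> card (\<Union>((\<lambda>i. N i - U) ` L))"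
          unfolding e1 using K(4)[folded U_def] by linarith
      qed
      have c2: "card (I - K) < card I" using K fI
        by (metis Diff_subset card_Diff_subset card_gt_0_iff diff_less fK finite_subset subset_empty)
      have s2: "sum d (I - K) \<le> sum d I" using fI by (simp add: sum_mono2)
      obtain T2 where T2: "\<forall>i\<in>I - K. T2 i \<subseteq> N i - U \<and> card (T2 i) = d i"
        "\<forall>i\<in>I - K. \<forall>i'\<in>I - K. i \<noteq> i' \<longrightarrow> T2 i \<inter> T2 i' = {}"
        using less.hyps[of "I - K" d "\<lambda>i. N i - U"] c2 s2 fI fN H2 by force
      have sub: "\<forall>i\<in>K. T1 i \<subseteq> U" using T1(1) unfolding U_def by blast
      show ?thesis
        apply (rule exI[of _ "\<lambda>i. if i \<in> K then T1 i else T2 i"])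
        using T1 T2 sub by auto blast+
    next
      case noK: False
      obtain i where i: "i \<in> I" "d i > 0" using nz by auto
      have "d i \<le> card (N i)" using H[rule_format, of "{i}"] i by auto
      then have "N i \<noteq> {}" using i by auto
      then obtain x where x: "x \<in> N i" by auto
      define d' where "d' = d(i := d i - 1)"
      define N' where "N' = (\<lambda>k. N k - {x})"
      have le: "\<And>K. sum d' K \<le> sum d K" unfolding d'_def by (intro sum_mono) auto
      have sI: "sum d I = d i + sum d (I - {i})" using fI i(1) by (simp add: sum.remove)
      have sI': "sum d' I = d' i + sum d' (I - {i})" using fI i(1) by (simp add: sum.remove)
      have "sum d' (I - {i}) = sum d (I - {i})" unfolding d'_def by (intro sum.cong) auto
      then have sdec: "sum d' I + 1 = sum d I" using sI sI' i(2) unfolding d'_def by simp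
      have H': "\<forall>K\<subseteq>I. sum d' K \<le> card (\<Union>(N' ` K))"
      proof (intro allI impI)
        fix K assume K: "K \<subseteq> I"
        have fK: "finite K" using K fI finite_subset by blast
        have fUK: "finite (\<Union>(N ` K))" using fK fN K by auto
        have e: "\<Union>(N' ` K) = \<Union>(N ` K) - {x}" unfolding N'_def by auto
        have cd: "card (\<Union>(N ` K)) \<le> card (\<Union>(N ` K) - {x}) + 1"
          using fUK by (simp add: card_Diff_singleton_if) linarith
        show "sum d' K \<le> card (\<Union>(N' ` K))"
        proof (cases "K = {}")
          case True then show ?thesis by simp
        next
          case Kne: False
          show ?thesis
          proof (cases "K = I")
            case True
            have "x \<in> \<Union>(N ` K)" using True x i by auto
            then have "card (\<Union>(N ` K) - {x}) + 1 = card (\<Union>(N ` K))"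
              using fUK by (metis Suc_eq_plus1 card_Suc_Diff1)
            moreover have "sum d I \<le> card (\<Union>(N ` I))" using H by blast
            ultimately show ?thesis using sdec e True by simp
          next
            case False
            then have "sum d K < card (\<Union>(N ` K))" using noK K Kne H le_neq_implies_less by blast
            then show ?thesis unfolding e using le[of K] cd by linarith
          qed
        qed
      qed
      have fN': "\<forall>k\<in>I. finite (N' k)" using fN unfolding N'_def by auto
      obtain T' where T': "\<forall>k\<in>I. T' k \<subseteq> N' k \<and> card (T' k) = d' k"
        "\<forall>k\<in>I. \<forall>k'\<in>I. k \<noteq> k' \<longrightarrow> T' k \<inter> T' k' = {}"
        using less.hyps[of I d' N'] sdec fI fN' H' by force
      have xn: "\<forall>k\<in>I. x \<notin> T' k" using T'(1) unfolding N'_def by auto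
      have fT: "finite (T' i)" using T'(1) fN' i(1) finite_subset by blast
      have ci: "card (insert x (T' i)) = d i"
        using xn i fT T'(1) unfolding d'_def by simp
      show ?thesis
        apply (rule exI[of _ "T'(i := insert x (T' i))"])
        using T' xn ci x i unfolding N'_def d'_def by auto
    qed
  qed
qed

lemma card_as_sum: "finite U \<Longrightarrow> A \<subseteq> U \<Longrightarrow> real (card A) = (\<Sum>x\<in>U. if x \<in> A then 1 else 0)"
  by (simp add: sum.If_cases Int_absorb1 inf.absorb2)

theorem mainTheorem2:
  fixes s :: nat and J :: "'j set" and \<gamma> :: "'j \<Rightarrow> real"
    and S :: "'j \<Rightarrow> nat \<Rightarrow> 'a set" and f :: "'j \<Rightarrow> nat \<Rightarrow> nat"
  assumes "s \<ge> 2"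
    and "finite J"
    and "\<And>j. j \<in> J \<Longrightarrow> \<gamma> j \<ge> 0"
    and "(\<Sum>j\<in>J. \<gamma> j) \<le> 1"
    and "\<And>j i. j \<in> J \<Longrightarrow> i \<in> {1..s} \<Longrightarrow> finite (S j i)"
    and "\<And>j i. j \<in> J \<Longrightarrow> i \<in> {1..s} \<Longrightarrow> f j i \<le> card (S j i)"
    and "\<And>j i i'. j \<in> J \<Longrightarrow> i \<in> {1..s} \<Longrightarrow> i' \<in> {1..s} \<Longrightarrow> i \<noteq> i'
           \<Longrightarrow> S j i \<inter> S j i' = {}"
  shows "\<exists>T :: nat \<Rightarrow> 'a set.
           (\<forall>i\<in>{1..s}. T i \<subseteq> (\<Union>j\<in>J. S j i)) \<and>
           (\<forall>i\<in>{1..s}. \<forall>i'\<in>{1..s}. i \<noteq> i' \<longrightarrow> T i \<inter> T i' = {}) \<and>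
           (\<forall>i\<in>{1..s}. int (card (T i)) = \<lfloor>\<Sum>j\<in>J. \<gamma> j * real (f j i)\<rfloor>)"
proof -
  define N where "N = (\<lambda>i. \<Union>j\<in>J. S j i)"
  define d where "d = (\<lambda>i. nat \<lfloor>\<Sum>j\<in>J. \<gamma> j * real (f j i)\<rfloor>)"
  have nn: "\<And>i. (\<Sum>j\<in>J. \<gamma> j * real (f j i)) \<ge> 0"
    using assms(3) by (intro sum_nonneg) auto
  have dle: "\<And>i. real (d i) \<le> (\<Sum>j\<in>J. \<gamma> j * real (f j i))"
    unfolding d_def using nn by (metis floor_le_iff of_int_floor_le of_nat_nat le_floor_iff floor_mono zero_le_floor)
  have fN: "\<forall>i\<in>{1..s}. finite (N i)" unfolding N_def using assms(2,5) by auto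
  have H: "\<forall>K\<subseteq>{1..s}. sum d K \<le> card (\<Union>(N ` K))"
  proof (intro allI impI)
    fix K assume K: "K \<subseteq> {1..s}"
    have fK: "finite K" using K finite_subset by blast
    define U where "U = \<Union>(N ` K)"
    have fU: "finite U" unfolding U_def using fN K fK by auto
    define A where "A = (\<lambda>j. \<Union>i\<in>K. S j i)"
    have AU: "\<And>j. j \<in> J \<Longrightarrow> A j \<subseteq> U" unfolding A_def U_def N_def by auto
    have cA: "\<And>j. j \<in> J \<Longrightarrow> card (A j) = (\<Sum>i\<in>K. card (S j i))"
      unfolding A_def
    proof (intro card_UN_disjoint)
      fix j assume j: "j \<in> J"
      show "finite K" by (rule fK)
      show "\<forall>i\<in>K. finite (S j i)" using assms(5) j K by auto
      show "\<forall>i\<in>K. \<forall>i'\<in>K. i \<noteq> i' \<longrightarrow> S j i \<inter> S j i' = {}" using assms(7) j K by blast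
    qed
    have "real (sum d K) = (\<Sum>i\<in>K. real (d i))" by simp
    also have "\<dots> \<le> (\<Sum>i\<in>K. \<Sum>j\<in>J. \<gamma> j * real (f j i))" by (intro sum_mono dle)
    also have "\<dots> = (\<Sum>j\<in>J. \<gamma> j * (\<Sum>i\<in>K. real (f j i)))"
      by (subst sum.swap) (simp add: sum_distrib_left)
    also have "\<dots> \<le> (\<Sum>j\<in>J. \<gamma> j * real (card (A j)))"
    proof (intro sum_mono mult_left_mono)
      fix j assume j: "j \<in> J"
      show "0 \<le> \<gamma> j" using assms(3) j by auto
      have "(\<Sum>i\<in>K. real (f j i)) \<le> (\<Sum>i\<in>K. real (card (S j i)))"
        using assms(6) j K by (intro sum_mono) auto
      then show "(\<Sum>i\<in>K. real (f j i)) \<le> real (card (A j))" using cA[OF j] by simp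
    qed
    also have "\<dots> = (\<Sum>j\<in>J. \<Sum>x\<in>U. \<gamma> j * (if x \<in> A j then 1 else 0))"
      using card_as_sum[OF fU AU] by (simp add: sum_distrib_left)
    also have "\<dots> = (\<Sum>x\<in>U. \<Sum>j\<in>J. \<gamma> j * (if x \<in> A j then 1 else 0))"
      by (rule sum.swap)
    also have "\<dots> \<le> (\<Sum>x\<in>U. 1)"
    proof (intro sum_mono)
      fix x
      have "(\<Sum>j\<in>J. \<gamma> j * (if x \<in> A j then 1 else 0)) \<le> (\<Sum>j\<in>J. \<gamma> j)"
        using assms(3) by (intro sum_mono) auto
      then show "(\<Sum>j\<in>J. \<gamma> j * (if x \<in> A j then 1 else 0)) \<le> 1" using assms(4) by linarith
    qed
    also have "\<dots> = real (card U)" by simp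
    finally show "sum d K \<le> card (\<Union>(N ` K))" unfolding U_def by linarith
  qed
  obtain T where T: "\<forall>i\<in>{1..s}. T i \<subseteq> N i \<and> card (T i) = d i"
    "\<forall>i\<in>{1..s}. \<forall>i'\<in>{1..s}. i \<noteq> i' \<longrightarrow> T i \<inter> T i' = {}"
    using hall_demand[OF _ fN H] by auto
  show ?thesis
  proof (intro exI[of _ T] conjI)
    show "\<forall>i\<in>{1..s}. T i \<subseteq> (\<Union>j\<in>J. S j i)" using T(1) unfolding N_def by auto
    show "\<forall>i\<in>{1..s}. \<forall>i'\<in>{1..s}. i \<noteq> i' \<longrightarrow> T i \<inter> T i' = {}" by (rule T(2))
    show "\<forall>i\<in>{1..s}. int (card (T i)) = \<lfloor>\<Sum>j\<in>J. \<gamma> j * real (f j i)\<rfloor>"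
      using T(1) nn unfolding d_def by simp
  qed
qed

end
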